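(* Let $q$ be a power of $2$, $k\ge1$, and let $T=\{x\in\mathbb{F}_{q^{3k}}:\mathrm{Tr}_{q^{3k}/q^k}(x)=0\}$. Then for every $c\in\mathbb{F}_{q^{3k}}\setminus\mathbb{F}_{q^k}$, \[ \sum_{x\in T}(-1)^{\mathrm{Tr}_{q^{3k}/2}\left(c\,x^{1+2q^k+q^{2k}}\right)}=0. \]
   Context: $\mathbb{F}_m$ denotes the finite field with $m$ elements. $\mathrm{Tr}_{q^{3k}/q^k}(x)=x+x^{q^k}+x^{q^{2k}}$ is the relative trace to the subfield $\mathbb{F}_{q^k}$, and $\mathrm{Tr}_{q^{3k}/2}$ is the absolute trace from $\mathbb{F}_{q^{3k}}$ to $\mathbb{F}_2$. *)

theory Defs
  imports Main
begin

definition rel_trace :: "nat \<Rightarrow> nat \<Rightarrow> 'a::field \<Rightarrow> 'a" where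
  "rel_trace q k x = x + x ^ (q ^ k) + x ^ (q ^ (2 * k))"

definition abs_trace :: "nat \<Rightarrow> 'a::field \<Rightarrow> 'a" where
  "abs_trace n x = (\<Sum>i<n. x ^ (2 ^ i))"

text \<open>(-1)^t for t in F_2 (embedded in the field): 1 if t = 0, -1 otherwise.\<close>
definition add_char :: "'a::field \<Rightarrow> int" where
  "add_char t = (if t = 0 then 1 else -1)"

end

theory Submission imports Defs "HOL-Computational_Algebra.Polynomial" begin

lemma fermat_ff:
  fixes x :: "'a::{finite,field}"
  shows "x ^ card (UNIV::'a set) = x"
proof (cases "x = 0")
  case True
  have "card (UNIV::'a set) > 0" by (simp add: finite_UNIV_card_ge_0)
  then show ?thesis using True by simp
next
  case False
  let ?A = "UNIV - {0::'a}"
  have bij: "bij_betw ((*) x) ?A ?A"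
    unfolding bij_betw_def inj_on_def image_def using False
    apply auto
    subgoal for y by (rule bexI[of _ "inverse x * y"]) (auto simp: field_simps)
    done
  have "(\<Prod>y\<in>?A. x * y) = (\<Prod>y\<in>?A. y)"
    using prod.reindex_bij_betw[OF bij, of "\<lambda>y. y"] by simp
  moreover have "(\<Prod>y\<in>?A. x * y) = x ^ card ?A * (\<Prod>y\<in>?A. y)"
    by (simp add: prod.distrib)
  moreover have "(\<Prod>y\<in>?A. y) \<noteq> 0" by simp
  ultimately have "x ^ card ?A = 1" by simp
  moreover have "card ?A = card (UNIV::'a set) - 1" by (simp add: card_Diff_subset)
  moreover have "card (UNIV::'a set) = Suc (card (UNIV::'a set) - 1)"
    using finite_UNIV_card_ge_0[where 'a='a] by simp
  ultimately show ?thesis by (metis power_Suc mult_1_right)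
qed

lemma char2_ff:
  assumes "card (UNIV::'a::{finite,field} set) = 2 ^ n" "n \<ge> 1"
  shows "(1::'a) + 1 = 0"
proof -
  have "(-1::'a) ^ (2 ^ n) = -1" using fermat_ff[of "-1::'a"] assms by simp
  moreover have "even ((2::nat) ^ n)" using assms by simp
  ultimately have "(-1::'a) = 1" by simp
  then show ?thesis by (metis add.right_inverse)
qed

lemma sum_lessThan_add_split:
  "(\<Sum>i<(a::nat)+b. f i) = (\<Sum>i<a. f i) + (\<Sum>i<b. f (a+i))"
  by (induction b arbitrary: f) (simp_all add: ac_simps)

lemma card_additive:
  fixes h :: "'a::{finite,ab_group_add} \<Rightarrow> 'b::ab_group_add"
  assumes add: "\<And>x y. h (x + y) = h x + h y"
  shows "card (UNIV::'a set) = card (range h) * card {x. h x = 0}"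
proof -
  have hm: "h (x - y) = h x - h y" for x y
    using add[of "x - y" y] by (simp add: algebra_simps)
  have U: "UNIV = (\<Union>v\<in>range h. {x. h x = v})" by auto
  have "card (UNIV::'a set) = (\<Sum>v\<in>range h. card {x. h x = v})"
    by (subst U, rule card_UN_disjoint) auto
  also have "\<dots> = (\<Sum>v\<in>range h. card {x. h x = 0})"
  proof (rule sum.cong[OF refl])
    fix v assume "v \<in> range h"
    then obtain a where a: "v = h a" by auto
    have "bij_betw (\<lambda>z. z + a) {x. h x = 0} {x. h x = v}"
      unfolding bij_betw_def inj_on_def image_def
      apply (auto simp: add a)
      subgoal for x by (rule exI[of _ "x - a"]) (auto simp: hm)
      done
    then show "card {x. h x = v} = card {x. h x = 0}"
      by (simp add: bij_betw_same_card)
  qed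
  also have "\<dots> = card (range h) * card {x. h x = 0}" by simp
  finally show ?thesis .
qed

lemma nat_prod_bound:
  fixes a b Q :: nat
  assumes "a * b = Q ^ 3" "a \<le> Q ^ 2" "b \<le> Q" "Q > 0"
  shows "a = Q ^ 2 \<and> b = Q"
proof -
  have "b = Q"
  proof (rule ccontr)
    assume "b \<noteq> Q" then have "b < Q" using assms by simp
    have "a * b \<le> Q^2 * b" using assms(2) by (rule mult_le_mono1)
    also have "\<dots> < Q^2 * Q" using \<open>b < Q\<close> assms by simp
    finally have "a * b < Q^2 * Q" .
    moreover have "Q^3 = Q^2 * Q" by (simp add: power3_eq_cube power2_eq_square)
    ultimately show False using assms(1) by linarith
  qed
  then show ?thesis using assms by (simp add: power3_eq_cube power2_eq_square)
qed

locale ff =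
  fixes Q e :: nat and ty :: "'a::{finite,field} itself"
  assumes e1: "e \<ge> 1" and Qdef: "Q = 2 ^ e" and cardF: "card (UNIV::'a set) = Q ^ 3"
begin

lemma Q2: "Q \<ge> 2" using e1 Qdef
  by (metis One_nat_def le_less_trans less_exp not_less_eq_eq numeral_2_eq_2 power_one_right power_increasing_iff zero_less_two)

lemma two0: "(1::'a) + 1 = 0"
  using char2_ff[of "3*e"] cardF e1 Qdef by (simp add: power_mult[symmetric] mult.commute)

lemma two0': "(2::'a) = 0" by (metis one_add_one two0)

lemma add_self[simp]: "(x::'a) + x = 0"
proof -
  have "x + x = x * (1 + 1)" by (simp add: algebra_simps)
  then show ?thesis using two0 by simp
qed

lemma minus_self[simp]: "- (x::'a) = x"
  using add_self[of x] by (metis add.inverse_unique)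

lemma diff_is_add: "(x::'a) - y = x + y"
  by (metis diff_conv_add_uminus minus_self)

lemma frob2: "((x::'a) + y)^2 = x^2 + y^2"
proof -
  have "2 * x * y = 0" using two0' by simp
  then show ?thesis by (simp add: power2_sum)
qed

lemma frob_pow2: "((x::'a) + y)^(2^j) = x^(2^j) + y^(2^j)"
proof (induction j)
  case 0 then show ?case by simp
next
  case (Suc j)
  have "(x + y)^(2^Suc j) = ((x+y)^(2^j))^2" by (simp add: power_mult[symmetric] mult.commute)
  also have "\<dots> = (x^(2^j))^2 + (y^(2^j))^2" using Suc frob2 by simp
  finally show ?case by (simp add: power_mult[symmetric] mult.commute)
qed

lemma frob_sum2: "(\<Sum>i\<in>A. f i :: 'a)^(2^j) = (\<Sum>i\<in>A. (f i)^(2^j))"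
  by (induction A rule: infinite_finite_induct) (simp_all add: frob_pow2)

lemma frQ: "((x::'a) + y)^Q = x^Q + y^Q" using frob_pow2 Qdef by simp

lemma fr3: "(((x::'a)^Q)^Q)^Q = x"
  using fermat_ff[of x] cardF by (simp add: power_mult[symmetric] power3_eq_cube)

definition tr :: "'a \<Rightarrow> 'a" where "tr x = x + x^Q + (x^Q)^Q"

definition K :: "'a set" where "K = {x. x^Q = x}"

lemma tr_add: "tr (x + y) = tr x + tr y" unfolding tr_def by (simp add: frQ algebra_simps)

lemma tr_fr: "tr (x^Q) = tr x" unfolding tr_def by (simp add: fr3 algebra_simps)

lemma tr_in_K: "(tr x)^Q = tr x" unfolding tr_def by (simp add: frQ fr3 algebra_simps)

lemma tr_scal: "\<mu>^Q = \<mu> \<Longrightarrow> tr (\<mu> * x) = \<mu> * tr x"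
  unfolding tr_def by (simp add: power_mult_distrib algebra_simps)

lemma tr0[simp]: "tr 0 = 0" unfolding tr_def using Q2 by (simp add: power_0_left)


lemma add_eq0_iff: "((a::'a) + b = 0) = (a = b)"
proof
  assume "a + b = 0"
  then have "a = a + (b + b)" by simp
  also have "\<dots> = (a + b) + b" by (simp add: add.assoc)
  finally show "a = b" using \<open>a + b = 0\<close> by simp
qed simp

lemma K0[simp]: "0 \<in> K" unfolding K_def using Q2 by (simp add: power_0_left)
lemma K1[simp]: "1 \<in> K" unfolding K_def by simp
lemma K_add: "a \<in> K \<Longrightarrow> b \<in> K \<Longrightarrow> a + b \<in> K" unfolding K_def by (simp add: frQ)
lemma K_mult: "a \<in> K \<Longrightarrow> b \<in> K \<Longrightarrow> a * b \<in> K" unfolding K_def by (simp add: power_mult_distrib)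
lemma K_inv: "a \<in> K \<Longrightarrow> inverse a \<in> K" unfolding K_def by (simp add: power_inverse)
lemma K_pow: "a \<in> K \<Longrightarrow> a ^ n \<in> K" by (induction n) (simp_all add: K_mult)

lemma card_K_le: "card K \<le> Q"
proof -
  define p :: "'a poly" where "p = monom 1 Q + [:0,1:]"
  have dp: "degree p = Q" unfolding p_def using Q2
    by (subst degree_add_eq_left) (simp_all add: degree_monom_eq)
  then have "p \<noteq> 0" using Q2 by auto
  have "K = {x. poly p x = 0}" unfolding K_def p_def by (simp add: poly_monom add_eq0_iff)
  then show ?thesis using card_poly_roots_bound[OF \<open>p \<noteq> 0\<close>] dp by simp
qed

definition T :: "'a set" where "T = {x. tr x = 0}"

lemma card_T_le: "card T \<le> Q^2"
proof -
  define p :: "'a poly" where "p = monom 1 (Q*Q) + (monom 1 Q + [:0,1:])"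
  have d1: "degree (monom 1 Q + [:0,1:] :: 'a poly) = Q" using Q2
    by (subst degree_add_eq_left) (simp_all add: degree_monom_eq)
  have "Q < Q * Q" using Q2 by simp
  then have dp: "degree p = Q*Q" unfolding p_def using d1
    by (subst degree_add_eq_left) (simp_all add: degree_monom_eq)
  then have "p \<noteq> 0" using Q2 by auto
  have "T = {x. poly p x = 0}" unfolding T_def tr_def p_def
    by (simp add: poly_monom power_mult[symmetric] algebra_simps)
  then show ?thesis using card_poly_roots_bound[OF \<open>p \<noteq> 0\<close>] dp by (simp add: power2_eq_square)
qed

lemma card_K_T: "card K = Q \<and> card T = Q^2"
proof -
  define h where "h = (\<lambda>y::'a. y + y^Q)"
  have hadd: "h (x + y) = h x + h y" for x y unfolding h_def by (simp add: frQ algebra_simps)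
  have ker: "{x. h x = 0} = K" unfolding h_def K_def by (auto simp: add_eq0_iff)
  have rng: "range h \<subseteq> T" unfolding h_def T_def tr_def by (auto simp: frQ fr3 algebra_simps)
  have "card (range h) * card K = Q^3" using card_additive[of h] hadd ker cardF by simp
  moreover have "card (range h) \<le> Q^2" using card_mono[OF _ rng] card_T_le by simp
  ultimately have "card (range h) = Q^2 \<and> card K = Q" using nat_prod_bound card_K_le Q2 by simp
  moreover have "card (range h) \<le> card T" using card_mono[OF _ rng] by simp
  ultimately show ?thesis using card_T_le by simp
qed


lemma abs_trace_add: "abs_trace n (x + y) = abs_trace n x + abs_trace n (y::'a)"
  unfolding abs_trace_def by (simp add: frob_pow2 sum.distrib)

lemma abs_trace_0[simp]: "abs_trace n (0::'a) = 0"
  unfolding abs_trace_def by (simp add: power_0_left)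

lemma abs_trace_tr: "abs_trace (3*e) y = abs_trace e (tr y)"
proof -
  have a: "(y^Q)^(2^i) = y^(2^(e+i))" for y :: 'a and i
    by (simp add: Qdef power_mult[symmetric] power_add)
  have "abs_trace e (tr y) = (\<Sum>i<e. y^(2^i) + y^(2^(e+i)) + y^(2^(e+(e+i))))"
    unfolding abs_trace_def tr_def by (simp add: frob_pow2 a)
  also have "\<dots> = (\<Sum>i<e. y^(2^i)) + (\<Sum>i<e. y^(2^(e+i))) + (\<Sum>i<e. y^(2^(e+(e+i))))"
    by (simp add: sum.distrib)
  also have "\<dots> = (\<Sum>i<e+(e+e). y^(2^i))"
    by (simp add: sum_lessThan_add_split add.assoc)
  finally show ?thesis unfolding abs_trace_def by (simp add: numeral_3_eq_3)
qed

lemma abs_trace_K01: assumes "s \<in> K" shows "abs_trace e s = 0 \<or> abs_trace e s = 1"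
proof -
  define t where "t = abs_trace e s"
  have sq: "t^2 = (\<Sum>i<e. s^(2^Suc i))"
    unfolding t_def abs_trace_def using frob_sum2[of "\<lambda>i. s^(2^i)" "{..<e}" 1]
    by (simp add: power_mult[symmetric] mult.commute)
  have "(\<Sum>i<Suc e. s^(2^i)) = s + t^2" unfolding sq by (subst sum.lessThan_Suc_shift) simp
  moreover have "(\<Sum>i<Suc e. s^(2^i)) = t + s"
  proof -
    have "s^(2^e) = s" using assms Qdef unfolding K_def by simp
    then show ?thesis unfolding t_def abs_trace_def by simp
  qed
  ultimately have "t^2 = t" by (metis add.commute add_left_cancel)
  then have "t * (t - 1) = 0" by (simp add: algebra_simps power2_eq_square)
  then show ?thesis unfolding t_def by auto
qed

lemma deg_tr_poly: "n \<ge> 1 \<Longrightarrow> degree (\<Sum>i<n. monom (1::'a) (2^i)) = 2^(n-1)"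
proof (induction n rule: dec_induct)
  case base then show ?case by (simp add: degree_monom_eq)
next
  case (step n)
  have "2^(n-1) < (2::nat)^n" using step by (cases n) auto
  then show ?case using step by (simp add: degree_add_eq_right degree_monom_eq)
qed

lemma abs_trace_nontriv: "\<exists>s\<in>K. abs_trace e s \<noteq> 0"
proof (rule ccontr)
  assume "\<not> ?thesis"
  then have sub: "K \<subseteq> {s. abs_trace e s = 0}" by auto
  define p :: "'a poly" where "p = (\<Sum>i<e. monom 1 (2^i))"
  have dp: "degree p = 2^(e-1)" unfolding p_def using deg_tr_poly e1 by simp
  then have "p \<noteq> 0" using e1 by (metis degree_0 less_exp not_less0 numeral_1_eq_Suc_0 numerals(1) power_0 zero_less_power zero_neq_numeral) 
  have eqs: "{s. abs_trace e s = 0} = {x. poly p x = 0}" unfolding p_def abs_trace_def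
    by (simp add: poly_sum poly_monom)
  have "card {s::'a. abs_trace e s = 0} \<le> 2^(e-1)" unfolding eqs using card_poly_roots_bound[OF \<open>p \<noteq> 0\<close>] dp by simp
  moreover have "card K \<le> card {s::'a. abs_trace e s = 0}" using card_mono[OF _ sub] by simp
  moreover have "(2::nat)^(e-1) < 2^e" using e1 by simp
  moreover have "card K = 2^e" using card_K_T Qdef by simp
  ultimately show False by linarith
qed

definition psi :: "'a \<Rightarrow> int" where "psi s = add_char (abs_trace e s)"

lemma char_sum_K: "(\<Sum>s\<in>K. psi s) = 0"
proof -
  obtain s0 where s0: "s0 \<in> K" "abs_trace e s0 \<noteq> 0" using abs_trace_nontriv by blast
  then have s01: "abs_trace e s0 = 1" using abs_trace_K01 by blast
  have bij: "bij_betw (\<lambda>s. s + s0) K K"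
    unfolding bij_betw_def inj_on_def image_def using s0
    apply (auto simp: K_add)
    subgoal for x by (rule bexI[of _ "x + s0"]) (auto simp: K_add add.assoc)
    done
  have neg: "psi (s + s0) = - psi s" if "s \<in> K" for s
    using abs_trace_K01[OF that] s01 unfolding psi_def add_char_def
    by (auto simp: abs_trace_add)
  have "(\<Sum>s\<in>K. psi s) = (\<Sum>s\<in>K. psi (s + s0))"
    using sum.reindex_bij_betw[OF bij, of psi] by simp
  also have "\<dots> = - (\<Sum>s\<in>K. psi s)" by (simp add: neg sum_negf)
  finally show ?thesis by simp
qed

lemma char_sum_scal:
  assumes "t \<in> K" shows "(\<Sum>\<mu>\<in>K. psi (\<mu> * t)) = (if t = 0 then int Q else 0)"
proof (cases "t = 0")
  case True
  then show ?thesis using card_K_T by (simp add: psi_def add_char_def)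
next
  case False
  have bij: "bij_betw (\<lambda>\<mu>. \<mu> * t) K K"
    unfolding bij_betw_def inj_on_def image_def using assms False
    apply (auto simp: K_mult)
    subgoal for x by (rule bexI[of _ "x * inverse t"]) (auto simp: K_mult K_inv)
    done
  show ?thesis using sum.reindex_bij_betw[OF bij, of psi] char_sum_K False by simp
qed


lemma card_Z:
  assumes dQ: "d^Q \<noteq> d"
  shows "card {x\<in>T. tr (d*x) = 0} = Q"
proof -
  define a where "a = d^Q"
  define b where "b = a^Q"
  have bQ: "b^Q = d" unfolding b_def a_def by (simp add: fr3)
  define x0 where "x0 = a + b"
  have x0Q: "x0^Q = b + d" unfolding x0_def by (simp add: frQ bQ b_def[symmetric])
  have x0nz: "x0 \<noteq> 0"
  proof
    assume "x0 = 0"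
    then have "a = b" unfolding x0_def by (simp add: add_eq0_iff)
    then have "a^Q = b^Q" by simp
    then have "b = d" using bQ b_def by simp
    then show False using \<open>a = b\<close> dQ a_def by simp
  qed
  have x0Qnz: "x0^Q \<noteq> 0" using x0nz Q2 by simp
  have trx0: "tr x0 = 0"
  proof -
    have "tr x0 = x0 + x0^Q + (x0^Q)^Q" unfolding tr_def ..
    also have "\<dots> = (a + b) + (b + d) + (d + a)" unfolding x0Q by (simp add: frQ bQ b_def[symmetric] a_def[symmetric] x0_def)
    also have "\<dots> = 2 * (a + b + d)" by algebra
    finally show ?thesis by (simp add: two0')
  qed
  have trdx0: "tr (d * x0) = 0"
  proof -
    have "tr (d * x0) = d * x0 + a * x0^Q + b * (x0^Q)^Q" unfolding tr_def
      by (simp add: power_mult_distrib a_def b_def)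
    also have "\<dots> = d * (a + b) + a * (b + d) + b * (d + a)" unfolding x0Q by (simp add: frQ bQ b_def[symmetric] a_def[symmetric] x0_def)
    also have "\<dots> = 2 * (d*a + a*b + b*d)" by algebra
    finally show ?thesis by (simp add: two0')
  qed
  have eq: "{x\<in>T. tr (d*x) = 0} = (\<lambda>\<mu>. \<mu> * x0) ` K"
  proof (intro equalityI subsetI)
    fix x assume "x \<in> (\<lambda>\<mu>. \<mu> * x0) ` K"
    then obtain \<mu> where mu: "\<mu> \<in> K" "x = \<mu> * x0" by auto
    have muQ: "\<mu>^Q = \<mu>" using mu K_def by simp
    have "tr x = 0" using mu tr_scal[OF muQ] trx0 by simp
    moreover have "tr (d * x) = 0" using mu tr_scal[OF muQ, of "d * x0"] trdx0
      by (simp add: mult.left_commute)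
    ultimately show "x \<in> {x\<in>T. tr (d*x) = 0}" unfolding T_def by simp
  next
    fix x assume "x \<in> {x\<in>T. tr (d*x) = 0}"
    then have t1: "x + x^Q + (x^Q)^Q = 0" and t2: "d*x + a * x^Q + b * (x^Q)^Q = 0"
      unfolding T_def tr_def by (simp_all add: power_mult_distrib a_def b_def)
    define y where "y = x^Q"
    have z: "(x^Q)^Q = x + y" using t1 unfolding y_def by (simp add: add_eq0_iff)
    have t2': "d*x + a*y + b*(x+y) = 0" using t2 z unfolding y_def by simp
    have "(d*x + b*x) + (a*y + b*y) = 0" using t2'
      by (simp add: algebra_simps)
    then have "d*x + b*x = a*y + b*y" by (simp add: add_eq0_iff)
    then have "x * (b + d) = y * (a + b)" by (simp add: algebra_simps)
    then have key: "x * x0^Q = y * x0" unfolding x0Q by (simp add: x0_def)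
    define \<mu> where "\<mu> = x / x0"
    have "\<mu>^Q = y / x0^Q" unfolding \<mu>_def y_def by (simp add: power_divide)
    also have "\<dots> = x / x0" using key x0nz x0Qnz by (simp add: field_simps)
    finally have "\<mu> \<in> K" unfolding K_def \<mu>_def by simp
    moreover have "x = \<mu> * x0" unfolding \<mu>_def using x0nz by simp
    ultimately show "x \<in> (\<lambda>\<mu>. \<mu> * x0) ` K" by blast
  qed
  have "inj_on (\<lambda>\<mu>. \<mu> * x0) K" unfolding inj_on_def using x0nz by simp
  then show ?thesis unfolding eq using card_K_T by (simp add: card_image)
qed


lemma powE: "(x::'a)^(1+2*Q+Q*Q) = x * (x^Q)^2 * (x^Q)^Q"
  by (simp add: power_add power_mult[symmetric] mult.commute)

lemma powE_K: "l \<in> K \<Longrightarrow> l^(1+2*Q+Q*Q) = l^4"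
  unfolding powE K_def by (simp add: power2_eq_square power4_eq_xxxx)

lemma tr_w: "tr (c * x^(1+2*Q+Q*Q)) = 0 \<longleftrightarrow> tr ((c^Q)^Q * x) = 0"
proof (cases "x = 0")
  case True
  then show ?thesis using Q2 by (simp add: power_0_left)
next
  case False
  define N where "N = x * x^Q * (x^Q)^Q"
  have NK: "N^Q = N" unfolding N_def by (simp add: power_mult_distrib fr3 algebra_simps)
  have Nnz: "N \<noteq> 0" unfolding N_def using False Q2 by simp
  have "c * x^(1+2*Q+Q*Q) = N * (c * x^Q)" unfolding powE N_def by (simp add: power2_eq_square algebra_simps)
  then have "tr (c * x^(1+2*Q+Q*Q)) = N * tr (c * x^Q)" using tr_scal[OF NK, of "c * x^Q"] by (simp only:)
  moreover have "tr (c * x^Q) = tr ((c^Q)^Q * x)"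
  proof -
    have "tr (c * x^Q) = tr (((c * x^Q)^Q)^Q)" by (simp add: tr_fr)
    also have "((c * x^Q)^Q)^Q = (c^Q)^Q * x" by (simp add: power_mult_distrib fr3)
    finally show ?thesis .
  qed
  ultimately show ?thesis using Nnz by simp
qed

lemma main_ff:
  assumes cQ: "c^Q \<noteq> c"
  shows "(\<Sum>x\<in>T. add_char (abs_trace (3*e) (c * x^(1 + 2*Q + Q*Q)))) = 0"
proof -
  define E where "E = 1 + 2*Q + Q*Q"
  define g where "g w = add_char (abs_trace (3*e) w)" for w :: 'a
  define S where "S = (\<Sum>x\<in>T. g (c * x^E))"
  define d where "d = (c^Q)^Q"
  have dQ: "d^Q \<noteq> d" using cQ unfolding d_def by (metis fr3)
  have step1: "S = (\<Sum>x\<in>T. g (l^4 * (c * x^E)))" if l: "l \<in> K - {0}" for l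
  proof -
    have lQ: "l^Q = l" using l K_def by simp
    have ilQ: "(inverse l)^Q = inverse l" using lQ by (simp add: power_inverse)
    have bij: "bij_betw ((*) l) T T"
      unfolding bij_betw_def inj_on_def image_def T_def using l
      apply (auto simp: tr_scal[OF lQ])
      subgoal for x by (rule exI[of _ "inverse l * x"]) (auto simp: tr_scal[OF ilQ])
      done
    have "(\<Sum>x\<in>T. g (c * (l * x)^E)) = S"
      unfolding S_def using sum.reindex_bij_betw[OF bij, of "\<lambda>x. g (c * x^E)"] by simp
    moreover have "c * (l * x)^E = l^4 * (c * x^E)" for x
      using powE_K[of l] l unfolding E_def by (simp add: power_mult_distrib)
    ultimately show ?thesis by simp
  qed
  have step3: "(\<Sum>l\<in>K - {0}. g (l^4 * (c * x^E))) = (if tr (d * x) = 0 then int Q else 0) - 1"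
    if x: "x \<in> T" for x
  proof -
    define w where "w = c * x^E"
    have inj4: "inj_on (\<lambda>l::'a. l^4) (K - {0})"
    proof (rule inj_onI)
      fix l m :: 'a assume "l^4 = m^4"
      moreover have "(l + m)^4 = l^4 + m^4" using frob_pow2[of l m 2] by simp
      ultimately have "(l + m)^4 = 0" by simp
      then have "l + m = 0" by simp
      then show "l = m" by (simp add: add_eq0_iff)
    qed
    have img4: "(\<lambda>l::'a. l^4) ` (K - {0}) \<subseteq> K - {0}" by (auto simp: K_pow)
    have bij4: "bij_betw (\<lambda>l::'a. l^4) (K - {0}) (K - {0})"
      unfolding bij_betw_def using inj4 endo_inj_surj[OF _ img4 inj4] by simp
    have "(\<Sum>l\<in>K - {0}. g (l^4 * w)) = (\<Sum>\<mu>\<in>K - {0}. g (\<mu> * w))"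
      using sum.reindex_bij_betw[OF bij4, of "\<lambda>\<mu>. g (\<mu> * w)"] by simp
    also have "\<dots> = (\<Sum>\<mu>\<in>K. g (\<mu> * w)) - 1"
      using sum.remove[of K 0 "\<lambda>\<mu>. g (\<mu> * w)"] by (simp add: g_def add_char_def)
    also have "(\<Sum>\<mu>\<in>K. g (\<mu> * w)) = (\<Sum>\<mu>\<in>K. psi (\<mu> * tr w))"
    proof (rule sum.cong[OF refl])
      fix \<mu> assume "\<mu> \<in> K"
      then have "\<mu>^Q = \<mu>" using K_def by simp
      then show "g (\<mu> * w) = psi (\<mu> * tr w)"
        unfolding g_def psi_def by (simp add: abs_trace_tr tr_scal)
    qed
    also have "\<dots> = (if tr w = 0 then int Q else 0)"
      using char_sum_scal[of "tr w"] tr_in_K K_def by simp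
    also have "(tr w = 0) = (tr (d * x) = 0)" unfolding w_def E_def d_def by (rule tr_w)
    finally show ?thesis unfolding w_def .
  qed
  have "(\<Sum>l\<in>K - {0}. S) = (\<Sum>l\<in>K - {0}. \<Sum>x\<in>T. g (l^4 * (c * x^E)))"
    using step1 by simp
  also have "\<dots> = (\<Sum>x\<in>T. \<Sum>l\<in>K - {0}. g (l^4 * (c * x^E)))" by (rule sum.swap)
  also have "\<dots> = (\<Sum>x\<in>T. (if tr (d * x) = 0 then int Q else 0) - 1)"
    using step3 by simp
  also have "\<dots> = int Q * int (card {x\<in>T. tr (d * x) = 0}) - int (card T)"
    by (simp add: sum_subtractf sum.inter_filter[symmetric])
  also have "\<dots> = 0" using card_Z[OF dQ] card_K_T by (simp add: power2_eq_square)
  finally have "int (card (K - {0})) * S = 0" by simp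
  moreover have "card (K - {0}) = Q - 1" using card_K_T by simp
  ultimately have "S = 0" using Q2 by simp
  then show ?thesis unfolding S_def g_def E_def .
qed

end


theorem mainTheorem6:
  fixes c :: "'a::{finite,field}" and q m k :: nat
  assumes "q = 2 ^ m" and "m \<ge> 1" and "k \<ge> 1"
    and "card (UNIV :: 'a set) = q ^ (3 * k)"
    and "c ^ (q ^ k) \<noteq> c"
  shows "(\<Sum>x\<in>{x::'a. rel_trace q k x = 0}.
            add_char (abs_trace (3 * k * m) (c * x ^ (1 + 2 * q ^ k + q ^ (2 * k))))) = 0"
proof -
  have Qd: "q ^ k = 2 ^ (k * m)" using assms(1) by (simp add: power_mult[symmetric] mult.commute)
  have km: "k * m \<ge> 1" using assms(2,3) by simp
  have cd: "card (UNIV :: 'a set) = (q ^ k) ^ 3" using assms(4) by (simp add: power_mult[symmetric] mult.commute)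
  interpret F: ff "q ^ k" "k * m" "TYPE('a)"
    by unfold_locales (use Qd km cd in auto)
  have q2: "q ^ (2 * k) = q ^ k * q ^ k" by (simp add: power_mult[symmetric] power_add[symmetric] mult_2)
  have rt: "rel_trace q k x = F.tr x" for x :: 'a
    unfolding rel_trace_def F.tr_def q2 by (simp add: power_mult)
  have "{x::'a. rel_trace q k x = 0} = F.T" unfolding F.T_def rt ..
  moreover have "3 * k * m = 3 * (k * m)" by simp
  ultimately show ?thesis using F.main_ff[OF assms(5)] q2 by (simp add: mult.assoc)
qed

end
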